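(* For every integer $i\ge2$ and every graph $G$, $\hom(S_{2,1^{i-2}};G)\cdot\hom(S_{2,1^{i}};G)\ge \hom(S_{2,1^{i-1}};G)^2$.
   Context: All graphs are finite; $\hom(H;G)$ is the number of graph homomorphisms from $H$ to $G$. For $k\ge0$, $S_{2,1^k}$ is the tree with vertex set $\{1,\ldots,k+3\}$ and edge set $\{\{1,j\}:2\le j\le k+2\}\cup\{\{k+2,k+3\}\}$. *)

theory Defs
  imports Main "HOL-Library.FuncSet"
begin

definition simple_graph :: "'a set \<Rightarrow> ('a \<Rightarrow> 'a \<Rightarrow> bool) \<Rightarrow> bool" where
  "simple_graph V E \<longleftrightarrow> finite V \<and> (\<forall>u v. E u v \<longrightarrow> u \<in> V \<and> v \<in> V)
     \<and> (\<forall>u v. E u v \<longrightarrow> E v u) \<and> (\<forall>u. \<not> E u u)"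

definition hom_count :: "'b set \<Rightarrow> 'b set set \<Rightarrow> 'a set \<Rightarrow> ('a \<Rightarrow> 'a \<Rightarrow> bool) \<Rightarrow> nat" where
  "hom_count VH EH V E =
     card {f \<in> VH \<rightarrow>\<^sub>E V. \<forall>u v. {u, v} \<in> EH \<longrightarrow> E (f u) (f v)}"

definition S_verts :: "nat \<Rightarrow> nat set" where
  "S_verts k = {1..k+3}"

definition S_edges :: "nat \<Rightarrow> nat set set" where
  "S_edges k = {{1, j} | j. 2 \<le> j \<and> j \<le> k + 2} \<union> {{k + 2, k + 3}}"

definition hom_S :: "nat \<Rightarrow> 'a set \<Rightarrow> ('a \<Rightarrow> 'a \<Rightarrow> bool) \<Rightarrow> nat" where
  "hom_S k V E = hom_count (S_verts k) (S_edges k) V E"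

end

theory Submission
  imports Defs Complex_Main
begin

lemma wcs:
  fixes c x :: "'v \<Rightarrow> real"
  assumes "finite A" "\<And>v. v \<in> A \<Longrightarrow> c v \<ge> 0"
  shows "(\<Sum>v\<in>A. c v * x v)^2 \<le> (\<Sum>v\<in>A. c v) * (\<Sum>v\<in>A. c v * (x v)^2)"
proof -
  have "0 \<le> (\<Sum>u\<in>A. \<Sum>v\<in>A. c u * c v * (x u - x v)^2)"
    using assms by (intro sum_nonneg) auto
  also have "(\<Sum>u\<in>A. \<Sum>v\<in>A. c u * c v * (x u - x v)^2)
     = (\<Sum>u\<in>A. \<Sum>v\<in>A. c u * (x u)^2 * c v) + (\<Sum>u\<in>A. \<Sum>v\<in>A. c u * (c v * (x v)^2))
        - 2 * (\<Sum>u\<in>A. \<Sum>v\<in>A. (c u * x u) * (c v * x v))"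
  proof -
    have e: "\<And>u v. c u*c v*(x u - x v)^2 = c u*(x u)^2*c v + c u*(c v*(x v)^2) - 2*((c u*x u)*(c v*x v))"
      by (simp add: power2_diff algebra_simps)
    show ?thesis
      by (simp only: e sum.distrib sum_subtractf flip: sum_distrib_left)
  qed
  also have "\<dots> = 2 * ((\<Sum>v\<in>A. c v) * (\<Sum>v\<in>A. c v * (x v)^2) - (\<Sum>v\<in>A. c v * x v)^2)"
  proof -
    have p1: "(\<Sum>u\<in>A. \<Sum>v\<in>A. c u * (x u)^2 * c v) = (\<Sum>v\<in>A. c v * (x v)^2) * (\<Sum>v\<in>A. c v)"
      by (simp add: sum_product)
    have p2: "(\<Sum>u\<in>A. \<Sum>v\<in>A. c u * (c v * (x v)^2)) = (\<Sum>v\<in>A. c v) * (\<Sum>v\<in>A. c v * (x v)^2)"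
      by (simp add: sum_product)
    have p3: "(\<Sum>u\<in>A. \<Sum>v\<in>A. (c u * x u) * (c v * x v)) = (\<Sum>v\<in>A. c v * x v)^2"
      by (simp add: sum_product power2_eq_square)
    show ?thesis unfolding p1 p2 p3 by (simp add: algebra_simps)
  qed
  finally show ?thesis by simp
qed

definition nb :: "'a set \<Rightarrow> ('a \<Rightarrow> 'a \<Rightarrow> bool) \<Rightarrow> 'a \<Rightarrow> 'a set" where
  "nb V E v = {u \<in> V. E v u}"

lemma edge_cond:
  assumes "simple_graph V E"
  shows "(\<forall>u v. {u,v} \<in> S_edges k \<longrightarrow> E (f u) (f v)) \<longleftrightarrow>
         (\<forall>j\<in>{2..k+2}. E (f 1) (f j)) \<and> E (f (k+2)) (f (k+3))"
proof -
  have sym: "\<And>a b. E a b \<Longrightarrow> E b a" using assms unfolding simple_graph_def by blast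
  show ?thesis
  proof
    assume h: "\<forall>u v. {u,v} \<in> S_edges k \<longrightarrow> E (f u) (f v)"
    show "(\<forall>j\<in>{2..k+2}. E (f 1) (f j)) \<and> E (f (k+2)) (f (k+3))"
    proof
      show "\<forall>j\<in>{2..k+2}. E (f 1) (f j)"
      proof
        fix j :: nat assume "j \<in> {2..k+2}"
        then have "{1,j} \<in> S_edges k" unfolding S_edges_def by auto
        then show "E (f 1) (f j)" using h by blast
      qed
      have "{k+2,k+3} \<in> S_edges k" unfolding S_edges_def by auto
      then show "E (f (k+2)) (f (k+3))" using h by blast
    qed
  next
    assume h: "(\<forall>j\<in>{2..k+2}. E (f 1) (f j)) \<and> E (f (k+2)) (f (k+3))"
    show "\<forall>u v. {u,v} \<in> S_edges k \<longrightarrow> E (f u) (f v)"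
    proof (intro allI impI)
      fix u v assume "{u,v} \<in> S_edges k"
      then show "E (f u) (f v)" unfolding S_edges_def using h sym
        by (auto simp: doubleton_eq_iff)
    qed
  qed
qed

lemma hom_S_formula:
  assumes G: "simple_graph V E"
  shows "hom_S k V E = (\<Sum>v\<in>V. (\<Sum>u\<in>nb V E v. card (nb V E u)) * card (nb V E v) ^ k)"
proof -
  define N where "N = nb V E"
  define H where "H = {f \<in> {1..k+3} \<rightarrow>\<^sub>E V. (\<forall>j\<in>{2..k+2}. E (f 1) (f j)) \<and> E (f (k+2)) (f (k+3))}"
  define T where "T = Sigma V (\<lambda>v. Sigma (N v) (\<lambda>u. N u \<times> ({2..k+1} \<rightarrow>\<^sub>E N v)))"
  define \<phi> where "\<phi> = (\<lambda>f::nat \<Rightarrow> 'a. (f 1, f (k+2), f (k+3), restrict f {2..k+1}))"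
  define \<psi> where "\<psi> = (\<lambda>(v::'a, u::'a, x::'a, g::nat \<Rightarrow> 'a). (\<lambda>j. if j \<in> {1..k+3} then (if j = 1 then v else if j = k+2 then u
      else if j = k+3 then x else g j) else undefined))"
  have fin: "finite V" using G unfolding simple_graph_def by blast
  have NV: "N v \<subseteq> V" for v unfolding N_def nb_def by auto
  have finN: "finite (N v)" for v using NV fin finite_subset by blast
  have hS: "hom_S k V E = card H"
    unfolding hom_S_def hom_count_def H_def S_verts_def using edge_cond[OF G] by simp
  have bij: "bij_betw \<phi> H T"
  proof (rule bij_betw_byWitness[where f'=\<psi>])
    show "\<forall>a\<in>H. \<psi> (\<phi> a) = a"
    proof
      fix f assume "f \<in> H"
      then have "f \<in> {1..k+3} \<rightarrow>\<^sub>E V" unfolding H_def by blast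
      then show "\<psi> (\<phi> f) = f" unfolding \<psi>_def \<phi>_def
        by (auto simp: fun_eq_iff PiE_def extensional_def)
    qed
    show "\<forall>a\<in>T. \<phi> (\<psi> a) = a"
    proof
      fix t assume "t \<in> T"
      then obtain v u x g where t: "t = (v,u,x,g)" and g: "g \<in> {2..k+1} \<rightarrow>\<^sub>E N v"
        unfolding T_def by auto
      show "\<phi> (\<psi> t) = t" unfolding t \<psi>_def \<phi>_def using g
        by (auto simp: fun_eq_iff PiE_def extensional_def)
    qed
    show "\<phi> ` H \<subseteq> T"
    proof
      fix y assume "y \<in> \<phi> ` H"
      then obtain f where f: "f \<in> H" and y: "y = \<phi> f" by blast
      have fP: "f \<in> {1..k+3} \<rightarrow>\<^sub>E V" and c1: "\<forall>j\<in>{2..k+2}. E (f 1) (f j)"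
        and c2: "E (f (k+2)) (f (k+3))" using f unfolding H_def by auto
      have "f j \<in> V" if "j \<in> {1..k+3}" for j using fP that by auto
      then show "y \<in> T" unfolding y \<phi>_def T_def N_def nb_def using c1 c2
        by auto
    qed
    show "\<psi> ` T \<subseteq> H"
    proof
      fix y assume "y \<in> \<psi> ` T"
      then obtain t where tT: "t \<in> T" and y: "y = \<psi> t" by blast
      then obtain v u x g where t: "t = (v,u,x,g)" and v: "v \<in> V" and u: "u \<in> N v" and x: "x \<in> N u"
        and g: "g \<in> {2..k+1} \<rightarrow>\<^sub>E N v"
        unfolding T_def by auto
      show "y \<in> H" unfolding y t \<psi>_def H_def using v u x g NV
        by (auto simp: N_def nb_def PiE_def Pi_def extensional_def)
    qed
  qed
  have "card H = card T" using bij_betw_same_card[OF bij] .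
  also have "card T = (\<Sum>v\<in>V. \<Sum>u\<in>N v. card (N u) * card (N v) ^ k)"
    unfolding T_def using fin finN
    by (simp add: card_SigmaI card_cartesian_product card_PiE finite_PiE)
  also have "\<dots> = (\<Sum>v\<in>V. (\<Sum>u\<in>N v. card (N u)) * card (N v) ^ k)"
    by (simp add: sum_distrib_right)
  finally show ?thesis using hS N_def by simp
qed

theorem theorem3p4:
  fixes V :: "'a set" and E :: "'a \<Rightarrow> 'a \<Rightarrow> bool" and i :: nat
  assumes "simple_graph V E" and "i \<ge> 2"
  shows "hom_S (i - 2) V E * hom_S i V E \<ge> (hom_S (i - 1) V E)^2"
proof -
  obtain m where m: "i = m + 2" using assms(2) by (metis add.commute le_Suc_ex)
  have fin: "finite V" using assms(1) unfolding simple_graph_def by blast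
  define a where "a v = (\<Sum>u\<in>nb V E v. card (nb V E u))" for v
  define d where "d v = card (nb V E v)" for v
  define c where "c v = real (a v * d v ^ m)" for v
  define x where "x v = real (d v)" for v
  have h: "real (hom_S k V E) = (\<Sum>v\<in>V. real (a v) * real (d v) ^ k)" for k
    unfolding hom_S_formula[OF assms(1)] a_def d_def by simp
  have h0: "real (hom_S m V E) = (\<Sum>v\<in>V. c v)" unfolding h c_def by simp
  have h1: "real (hom_S (m+1) V E) = (\<Sum>v\<in>V. c v * x v)" unfolding h c_def x_def
    by (simp add: algebra_simps)
  have h2: "real (hom_S (m+2) V E) = (\<Sum>v\<in>V. c v * (x v)^2)" unfolding h c_def x_def
    by (simp add: algebra_simps power_add power2_eq_square)
  have "real ((hom_S (m+1) V E)^2) \<le> real (hom_S m V E * hom_S (m+2) V E)"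
    unfolding of_nat_power of_nat_mult h0 h1 h2
    by (rule wcs[OF fin]) (simp add: c_def)
  then have "(hom_S (m+1) V E)^2 \<le> hom_S m V E * hom_S (m+2) V E"
    by (simp only: of_nat_le_iff)
  then show ?thesis unfolding m by simp
qed

end
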